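(* Let $x,y$ be any elements with $x+y=u_3+u_4$ and $xy=u_1u_2$. Then for every $n\ge0$, $$P_n(u_1,u_2,u_3,u_4\mid\alpha,\beta)=\sum_{k=0}^n\binom nk A_k(x,y\mid0,\alpha+\beta)\bigl(\alpha x-\beta y+(\beta-\alpha)u_3\bigr)^{n-k}=\sum_{k=0}^n\binom nk A_k(x,y\mid\alpha+\beta,0)\bigl(\alpha y-\beta x+(\beta-\alpha)u_3\bigr)^{n-k}.$$
   Context: For $\sigma=\sigma_1\cdots\sigma_m\in\mathfrak S_m$: ${\rm asc}(\sigma)$, ${\rm des}(\sigma)$ are the numbers of $i\in[m-1]$ with $\sigma_i<\sigma_{i+1}$, resp. $\sigma_i>\sigma_{i+1}$; ${\rm LRmax}(\sigma)$ is the number of $i$ with $\sigma_j<\sigma_i$ for all $j<i$; ${\rm RLmax}(\sigma)$ is the number of $i$ with $\sigma_j<\sigma_i$ for all $j>i$. With the convention $\sigma_0=\sigma_{m+1}=0$: ${\rm W}(\sigma)$ is the number of $i\in[m]$ with $\sigma_{i-1}<\sigma_i>\sigma_{i+1}$; ${\rm V}(\sigma)$ is the number of $i$ with $1<i<m$ and $\sigma_{i-1}>\sigma_i<\sigma_{i+1}$; ${\rm rdd}(\sigma)$ is the number of $i$ with $1<i\le m$ and $\sigma_{i-1}>\sigma_i>\sigma_{i+1}$; ${\rm lda}(\sigma)$ is the number of $i$ with $1\le i<m$ and $\sigma_{i-1}<\sigma_i<\sigma_{i+1}$. Define $$P_n(u_1,u_2,u_3,u_4\mid\alpha,\beta)=\sum_{\sigma\in\mathfrak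 S_{n+1}}u_1^{{\rm V}(\sigma)}u_2^{{\rm W}(\sigma)-1}u_3^{{\rm rdd}(\sigma)}u_4^{{\rm lda}(\sigma)}\alpha^{{\rm LRmax}(\sigma)-1}\beta^{{\rm RLmax}(\sigma)-1},$$ and $A_n(x,y\mid\alpha,\beta)=\sum_{\sigma\in\mathfrak S_{n+1}}x^{{\rm asc}(\sigma)}y^{{\rm des}(\sigma)}\alpha^{{\rm LRmax}(\sigma)-1}\beta^{{\rm RLmax}(\sigma)-1}$ for $n\ge0$ (so $A_0=1$). *)

theory Defs
  imports Main
begin

text \<open>Permutations of [m] as lists; sigma_i is the i-th entry (1-based).
  The padded value with sigma_0 = sigma_(m+1) = 0.\<close>

definition perms :: "nat \<Rightarrow> nat list set" where
  "perms m = {xs. distinct xs \<and> set xs = {1..m}}"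

definition pv :: "nat list \<Rightarrow> nat \<Rightarrow> nat" where
  "pv xs i = (if 1 \<le> i \<and> i \<le> length xs then xs ! (i - 1) else 0)"

definition asc :: "nat list \<Rightarrow> nat" where
  "asc xs = card {i \<in> {1..<length xs}. pv xs i < pv xs (i+1)}"

definition des :: "nat list \<Rightarrow> nat" where
  "des xs = card {i \<in> {1..<length xs}. pv xs i > pv xs (i+1)}"

definition LRmax :: "nat list \<Rightarrow> nat" where
  "LRmax xs = card {i \<in> {1..length xs}. \<forall>j \<in> {1..<i}. pv xs j < pv xs i}"

definition RLmax :: "nat list \<Rightarrow> nat" where
  "RLmax xs = card {i \<in> {1..length xs}. \<forall>j \<in> {i<..length xs}. pv xs j < pv xs i}"

definition peaksW :: "nat list \<Rightarrow> nat" where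
  "peaksW xs = card {i \<in> {1..length xs}. pv xs (i-1) < pv xs i \<and> pv xs i > pv xs (i+1)}"

definition valleysV :: "nat list \<Rightarrow> nat" where
  "valleysV xs = card {i \<in> {2..<length xs}. pv xs (i-1) > pv xs i \<and> pv xs i < pv xs (i+1)}"

definition rdd :: "nat list \<Rightarrow> nat" where
  "rdd xs = card {i \<in> {2..length xs}. pv xs (i-1) > pv xs i \<and> pv xs i > pv xs (i+1)}"

definition lda :: "nat list \<Rightarrow> nat" where
  "lda xs = card {i \<in> {1..<length xs}. pv xs (i-1) < pv xs i \<and> pv xs i < pv xs (i+1)}"

definition Ppoly :: "nat \<Rightarrow> 'a::comm_ring_1 \<Rightarrow> 'a \<Rightarrow> 'a \<Rightarrow> 'a \<Rightarrow> 'a \<Rightarrow> 'a \<Rightarrow> 'a" where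
  "Ppoly n u1 u2 u3 u4 \<alpha> \<beta> = (\<Sum>\<sigma>\<in>perms (n+1).
     u1 ^ valleysV \<sigma> * u2 ^ (peaksW \<sigma> - 1) * u3 ^ rdd \<sigma> * u4 ^ lda \<sigma> *
     \<alpha> ^ (LRmax \<sigma> - 1) * \<beta> ^ (RLmax \<sigma> - 1))"

definition Apoly :: "nat \<Rightarrow> 'a::comm_ring_1 \<Rightarrow> 'a \<Rightarrow> 'a \<Rightarrow> 'a \<Rightarrow> 'a" where
  "Apoly n x y \<alpha> \<beta> = (\<Sum>\<sigma>\<in>perms (n+1).
     x ^ asc \<sigma> * y ^ des \<sigma> * \<alpha> ^ (LRmax \<sigma> - 1) * \<beta> ^ (RLmax \<sigma> - 1))"

end

theory Submission
  imports Defs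
begin


definition conv :: "(nat \<Rightarrow> 'a::comm_ring_1) \<Rightarrow> (nat \<Rightarrow> 'a) \<Rightarrow> nat \<Rightarrow> 'a" where
  "conv s t n = (\<Sum>k=0..n. of_nat (n choose k) * s k * t (n - k))"

fun E :: "(nat \<Rightarrow> 'a::comm_ring_1) \<Rightarrow> nat \<Rightarrow> 'a" where
  "E a 0 = 1"
| "E a (Suc n) = (\<Sum>j=0..n. of_nat (n choose j) * E a j * a (n - j))"

lemma E_Suc_conv: "E a (Suc n) = conv (E a) a n"
  by (simp add: conv_def)

lemma conv_cong:
  assumes "\<And>m. m \<le> n \<Longrightarrow> s m = s' m" "\<And>m. m \<le> n \<Longrightarrow> t m = t' m"
  shows "conv s t n = conv s' t' n"
  unfolding conv_def by (rule sum.cong) (auto simp: assms)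

lemma conv_comm: "conv s t n = conv t s n"
proof -
  have "conv s t n = (\<Sum>k=0..n. of_nat (n choose (n - k)) * s (n - k) * t (n - (n - k)))"
    unfolding conv_def by (subst sum.atLeastAtMost_rev) simp
  also have "\<dots> = conv t s n"
    unfolding conv_def by (rule sum.cong) (auto simp: binomial_symmetric[symmetric] mult_ac)
  finally show ?thesis .
qed

lemma conv_add: "conv s (\<lambda>m. a m + b m) n = conv s a n + conv s b n"
  unfolding conv_def by (simp add: distrib_left sum.distrib)

lemma conv_Suc: "conv s t (Suc n) = conv (\<lambda>m. s (Suc m)) t n + conv s (\<lambda>m. t (Suc m)) n"
proof -
  have "conv s t (Suc n) = s 0 * t (Suc n) + (\<Sum>k=0..n. of_nat (Suc n choose Suc k) * s (Suc k) * t (n - k))"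
    unfolding conv_def by (subst sum.atLeast0_atMost_Suc_shift) simp
  also have "(\<Sum>k=0..n. of_nat (Suc n choose Suc k) * s (Suc k) * t (n - k))
     = (\<Sum>k=0..n. of_nat (n choose Suc k) * s (Suc k) * t (n - k)) + conv (\<lambda>m. s (Suc m)) t n"
    unfolding conv_def sum.distrib[symmetric] by (rule sum.cong) (simp_all add: algebra_simps)
  also have "s 0 * t (Suc n) + ((\<Sum>k=0..n. of_nat (n choose Suc k) * s (Suc k) * t (n - k)) + conv (\<lambda>m. s (Suc m)) t n)
      = (\<Sum>k=0..Suc n. of_nat (n choose k) * s k * t (Suc n - k)) + conv (\<lambda>m. s (Suc m)) t n"
    by (subst sum.atLeast0_atMost_Suc_shift) simp
  also have "(\<Sum>k=0..Suc n. of_nat (n choose k) * s k * t (Suc n - k)) = (\<Sum>k=0..n. of_nat (n choose k) * s k * t (Suc n - k))"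
    by (subst sum.atLeast0_atMost_Suc) (subst binomial_eq_0[of n "Suc n"], auto)
  also have "\<dots> = conv s (\<lambda>m. t (Suc m)) n"
    unfolding conv_def by (rule sum.cong) (auto simp: Suc_diff_le)
  finally show ?thesis by (simp add: algebra_simps)
qed

lemma conv_assoc: "conv (conv s t) u n = conv s (conv t u) n"
proof -
  have "conv (conv s t) u n = (\<Sum>j=0..n. \<Sum>i=0..n. if i \<le> j then
      of_nat (n choose j) * of_nat (j choose i) * s i * t (j - i) * u (n - j) else 0)"
    unfolding conv_def
  proof (rule sum.cong, simp)
    fix j assume j: "j \<in> {0..n}"
    have e: "{i \<in> {0..n}. i \<le> j} = {0..j}" using j by auto
    let ?g = "\<lambda>i. of_nat (n choose j) * of_nat (j choose i) * s i * t (j - i) * u (n - j)"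
    have "(\<Sum>i = 0..n. if i \<le> j then ?g i else 0) = sum ?g {i \<in> {0..n}. i \<le> j}"
      by (rule sum.inter_filter[symmetric]) simp
    also have "\<dots> = sum ?g {0..j}" by (simp only: e)
    finally show "of_nat (n choose j) * (\<Sum>k = 0..j. of_nat (j choose k) * s k * t (j - k)) * u (n - j) =
       (\<Sum>i = 0..n. if i \<le> j then ?g i else 0)"
      by (simp add: sum_distrib_left sum_distrib_right mult_ac)
  qed
  also have "\<dots> = (\<Sum>i=0..n. \<Sum>j=0..n. if i \<le> j then
      of_nat (n choose j) * of_nat (j choose i) * s i * t (j - i) * u (n - j) else 0)"
    by (rule sum.swap)
  also have "\<dots> = (\<Sum>i=0..n. \<Sum>j=i..n.
      of_nat (n choose i) * of_nat ((n - i) choose (j - i)) * s i * t (j - i) * u (n - j))"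
  proof (rule sum.cong, simp)
    fix i assume i: "i \<in> {0..n}"
    show "(\<Sum>j=0..n. if i \<le> j then
      of_nat (n choose j) * of_nat (j choose i) * s i * t (j - i) * u (n - j) else 0) =
      (\<Sum>j=i..n. of_nat (n choose i) * of_nat ((n - i) choose (j - i)) * s i * t (j - i) * u (n - j))"
      apply (subst sum.inter_filter[symmetric], simp)
      apply (rule sum.cong)
      using i apply force
      apply clarsimp
      subgoal for j
      proof -
        assume "i \<le> j" "j \<le> n"
        then have "of_nat (n choose j) * of_nat (j choose i) = (of_nat (n choose i) * of_nat (n - i choose j - i) :: 'a)"
          using choose_mult[of i j n] by (metis of_nat_mult)
        then show ?thesis by (simp only:)
      qed
      done
  qed
  also have "\<dots> = conv s (conv t u) n"
    unfolding conv_def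
  proof (rule sum.cong, simp)
    fix i assume i: "i \<in> {0..n}"
    have "(\<Sum>j=i..n. of_nat (n choose i) * of_nat ((n - i) choose (j - i)) * s i * t (j - i) * u (n - j))
       = (\<Sum>p=0..n-i. of_nat (n choose i) * of_nat ((n - i) choose p) * s i * t p * u (n - i - p))"
    proof -
      let ?g = "\<lambda>j. of_nat (n choose i) * of_nat ((n - i) choose (j - i)) * s i * t (j - i) * (u (n - j) :: 'a)"
      have "sum ?g {i..n} = sum ?g {0+i..(n-i)+i}" using i by simp
      also have "\<dots> = sum (\<lambda>p. ?g (p+i)) {0..n-i}" by (rule sum.shift_bounds_cl_nat_ivl)
      finally show ?thesis by (simp add: add.commute diff_diff_eq)
    qed
    then show "(\<Sum>j=i..n. of_nat (n choose i) * of_nat ((n - i) choose (j - i)) * s i * t (j - i) * u (n - j))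
      = of_nat (n choose i) * s i * (\<Sum>k=0..n - i. of_nat ((n - i) choose k) * t k * u (n - i - k))"
      by (simp add: sum_distrib_left mult_ac)
  qed
  finally show ?thesis .
qed

lemma E_unique:
  assumes "f 0 = 1" "\<And>n. f (Suc n) = conv f a n"
  shows "f n = E a n"
proof (induction n rule: less_induct)
  case (less n)
  show ?case
  proof (cases n)
    case 0 then show ?thesis using assms by simp
  next
    case (Suc m)
    have "f (Suc m) = conv f a m" by (rule assms(2))
    also have "\<dots> = conv (E a) a m" by (rule conv_cong) (auto simp: less Suc)
    finally show ?thesis using Suc by (simp only: E_Suc_conv)
  qed
qed

lemma conv_E: "conv (E a) (E b) n = E (\<lambda>m. a m + b m) n"
proof (rule E_unique)
  show "conv (E a) (E b) 0 = 1" by (simp add: conv_def)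
  fix n
  have "conv (E a) (E b) (Suc n) = conv (conv (E a) a) (E b) n + conv (E a) (conv (E b) b) n"
    by (simp only: conv_Suc E_Suc_conv)
  also have "conv (conv (E a) a) (E b) n = conv (conv (E a) (E b)) a n"
  proof -
    have "conv (conv (E a) a) (E b) n = conv (E a) (conv a (E b)) n" by (rule conv_assoc)
    also have "\<dots> = conv (E a) (conv (E b) a) n" by (rule conv_cong) (auto simp: conv_comm)
    also have "\<dots> = conv (conv (E a) (E b)) a n" by (rule conv_assoc[symmetric])
    finally show ?thesis .
  qed
  also have "conv (E a) (conv (E b) b) n = conv (conv (E a) (E b)) b n" by (rule conv_assoc[symmetric])
  finally show "conv (E a) (E b) (Suc n) = conv (conv (E a) (E b)) (\<lambda>m. a m + b m) n"
    by (simp add: conv_add)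
qed

lemma E_const: "E (\<lambda>m. if m = 0 then c else 0) n = c ^ n"
proof (induction n)
  case 0 then show ?case by simp
next
  case (Suc n)
  have "E (\<lambda>m. if m = 0 then c else 0) (Suc n) = (\<Sum>j=0..n. of_nat (n choose j) * E (\<lambda>m. if m = 0 then c else 0) j * (if n - j = 0 then c else 0))"
    by (simp only: E.simps)
  also have "\<dots> = (\<Sum>j=0..n. if j = n then c ^ n * c else 0)"
    by (rule sum.cong) (auto simp: Suc)
  finally show ?case by (simp add: mult_ac)
qed



definition arr :: "nat set \<Rightarrow> nat list set" where
  "arr S = {xs. distinct xs \<and> set xs = S}"

lemma finite_arr: "finite S \<Longrightarrow> finite (arr S)"
  unfolding arr_def
  by (rule finite_subset[OF _ finite_subset_distinct[of S]]) auto

lemma arr_empty: "arr {} = {[]}"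
  unfolding arr_def by auto

fun lw :: "(bool \<Rightarrow> bool \<Rightarrow> 'a::comm_ring_1) \<Rightarrow> nat \<Rightarrow> nat list \<Rightarrow> nat \<Rightarrow> 'a" where
  "lw t a [] b = 1"
| "lw t a (x # xs) b = t (a < x) (x < hd (xs @ [b])) * lw t x xs b"

lemma lw_split: "lw t a (l @ y # r) b = lw t a l y * t (last (a # l) < y) (y < hd (r @ [b])) * lw t y r b"
  by (induction l arbitrary: a) (auto simp: mult_ac)

lemma arr_decomp:
  assumes "finite S" "M \<in> S"
  shows "(\<Sum>xs\<in>arr S. F xs) = (\<Sum>T\<in>Pow (S - {M}). \<Sum>l\<in>arr T. \<Sum>r\<in>arr (S - {M} - T). F (l @ M # r))"
proof -
  let ?S' = "S - {M}"
  let ?D = "SIGMA T:Pow ?S'. arr T \<times> arr (?S' - T)"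
  let ?h = "\<lambda>(T, l, r). l @ M # r"
  have fin: "finite ?S'" using assms by simp
  have "(\<Sum>T\<in>Pow ?S'. \<Sum>l\<in>arr T. \<Sum>r\<in>arr (?S' - T). F (l @ M # r))
      = (\<Sum>T\<in>Pow ?S'. \<Sum>p\<in>arr T \<times> arr (?S' - T). F (?h (T, p)))"
    by (rule sum.cong, simp, subst sum.cartesian_product) (auto intro!: sum.cong)
  also have "\<dots> = (\<Sum>(T,p)\<in>?D. F (?h (T, p)))"
    by (rule sum.Sigma) (use fin in \<open>auto intro!: finite_arr finite_cartesian_product dest: finite_subset\<close>)
  also have "\<dots> = (\<Sum>q\<in>?D. F (?h q))"
    by (rule sum.cong) auto
  also have "\<dots> = (\<Sum>xs\<in>arr S. F xs)"
  proof (rule sum.reindex_bij_betw)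
    show "bij_betw ?h ?D (arr S)"
    proof (rule bij_betw_imageI)
      show "inj_on ?h ?D"
      proof (rule inj_onI)
        fix q q' assume q: "q \<in> ?D" "q' \<in> ?D" "?h q = ?h q'"
        obtain T l r where qq: "q = (T, l, r)" by (cases q) auto
        obtain T' l' r' where qq': "q' = (T', l', r')" by (cases q') auto
        have a: "T \<subseteq> S - {M}" "l \<in> arr T" "r \<in> arr (S - {M} - T)"
          "T' \<subseteq> S - {M}" "l' \<in> arr T'" "r' \<in> arr (S - {M} - T')"
          "l @ M # r = l' @ M # r'" using q qq qq' by auto
        have "M \<notin> set l" "M \<notin> set r" using a unfolding arr_def by auto
        then have "l = l' \<and> r = r'" using a(7) append_Cons_eq_iff[of M l r l' r'] by simp
        moreover have "T = T'" using a(2,5) \<open>l = l' \<and> r = r'\<close> unfolding arr_def by simp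
        ultimately show "q = q'" using qq qq' by simp
      qed
      show "?h ` ?D = arr S"
      proof
        show "?h ` ?D \<subseteq> arr S"
        proof
          fix xs assume "xs \<in> ?h ` ?D"
          then obtain T l r where a: "T \<subseteq> S - {M}" "l \<in> arr T" "r \<in> arr (S - {M} - T)"
            and xs: "xs = l @ M # r" by auto
          have l: "distinct l" "set l = T" and r: "distinct r" "set r = S - {M} - T"
            using a unfolding arr_def by auto
          have "distinct xs" unfolding xs using l r a(1) by auto
          moreover have "set xs = S" unfolding xs using l r a(1) assms(2) by auto
          ultimately show "xs \<in> arr S" unfolding arr_def by simp
        qed
        show "arr S \<subseteq> ?h ` ?D"
        proof
          fix xs assume xs: "xs \<in> arr S"
          then have "M \<in> set xs" using assms unfolding arr_def by auto
          then obtain l r where lr: "xs = l @ M # r" by (meson split_list)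
          have d: "distinct xs" "set xs = S" using xs unfolding arr_def by auto
          have "(set l, l, r) \<in> ?D"
            using d unfolding lr arr_def by auto
          then show "xs \<in> ?h ` ?D" by (rule image_eqI[rotated]) (simp add: lr)
        qed
      qed
    qed
  qed
  finally show ?thesis by simp
qed

lemma sum_pow_card:
  assumes "finite A"
  shows "(\<Sum>T\<in>Pow A. \<phi> (card T) (card (A - T))) =
     (\<Sum>k=0..card A. of_nat (card A choose k) * (\<phi> k (card A - k) :: 'a::comm_ring_1))"
proof -
  have "(\<Sum>T\<in>Pow A. \<phi> (card T) (card (A - T))) =
      (\<Sum>k\<in>{0..card A}. \<Sum>T\<in>{T. T \<in> Pow A \<and> card T = k}. \<phi> (card T) (card (A - T)))"
    by (rule sum.group[symmetric]) (use assms in \<open>auto intro: card_mono\<close>)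
  also have "\<dots> = (\<Sum>k\<in>{0..card A}. \<Sum>T\<in>{T. T \<subseteq> A \<and> card T = k}. \<phi> k (card A - k))"
    using assms by (intro sum.cong refl) (auto, metis card_Diff_subset finite_subset)
  also have "\<dots> = (\<Sum>k=0..card A. of_nat (card A choose k) * \<phi> k (card A - k))"
    using assms by (simp add: n_subsets)
  finally show ?thesis .
qed

lemma decomp_gen:
  fixes F GA GB :: "nat list \<Rightarrow> 'a::comm_ring_1"
  assumes "finite S" "M \<in> S"
    and F: "\<And>T l r. T \<subseteq> S - {M} \<Longrightarrow> l \<in> arr T \<Longrightarrow> r \<in> arr (S - {M} - T) \<Longrightarrow>
         F (l @ M # r) = GA l * c (card T) (card (S - {M} - T)) * GB r"
    and ga: "\<And>T. T \<subseteq> S - {M} \<Longrightarrow> (\<Sum>l\<in>arr T. GA l) = ga (card T)"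
    and gb: "\<And>T. T \<subseteq> S - {M} \<Longrightarrow> (\<Sum>r\<in>arr (S - {M} - T). GB r) = gb (card (S - {M} - T))"
  shows "(\<Sum>xs\<in>arr S. F xs) = (\<Sum>k=0..card (S - {M}). of_nat (card (S - {M}) choose k) *
            (ga k * c k (card (S - {M}) - k) * gb (card (S - {M}) - k)))"
proof -
  have "(\<Sum>xs\<in>arr S. F xs) = (\<Sum>T\<in>Pow (S - {M}). \<Sum>l\<in>arr T. \<Sum>r\<in>arr (S - {M} - T). F (l @ M # r))"
    by (rule arr_decomp[OF assms(1,2)])
  also have "\<dots> = (\<Sum>T\<in>Pow (S - {M}). ga (card T) * c (card T) (card (S - {M} - T)) * gb (card (S - {M} - T)))"
  proof (rule sum.cong, simp)
    fix T assume T: "T \<in> Pow (S - {M})"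
    have "(\<Sum>l\<in>arr T. \<Sum>r\<in>arr (S - {M} - T). F (l @ M # r)) =
        (\<Sum>l\<in>arr T. \<Sum>r\<in>arr (S - {M} - T). GA l * c (card T) (card (S - {M} - T)) * GB r)"
      using T by (intro sum.cong refl) (simp add: F)
    also have "\<dots> = (\<Sum>l\<in>arr T. GA l) * c (card T) (card (S - {M} - T)) * (\<Sum>r\<in>arr (S - {M} - T). GB r)"
      by (simp add: sum_distrib_left sum_distrib_right mult_ac)
    finally show "(\<Sum>l\<in>arr T. \<Sum>r\<in>arr (S - {M} - T). F (l @ M # r)) =
        ga (card T) * c (card T) (card (S - {M} - T)) * gb (card (S - {M} - T))"
      using T by (simp add: ga gb)
  qed
  also have "\<dots> = (\<Sum>k=0..card (S - {M}). of_nat (card (S - {M}) choose k) *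
            (ga k * c k (card (S - {M}) - k) * gb (card (S - {M}) - k)))"
    by (rule sum_pow_card[where \<phi>="\<lambda>i j. ga i * c i j * gb j"]) (use assms in simp)
  finally show ?thesis .
qed



definition pvg :: "nat \<Rightarrow> nat list \<Rightarrow> nat \<Rightarrow> nat \<Rightarrow> nat" where
  "pvg a xs b i = (if i = 0 then a else if i \<le> length xs then xs ! (i - 1) else b)"

lemma pv_pvg: "pv xs = pvg 0 xs 0"
  by (rule ext) (simp add: pv_def pvg_def)

lemma pvg_Suc: "pvg a (x # xs) b (Suc i) = pvg x xs b i"
  by (cases i) (auto simp: pvg_def)

fun cnt :: "(nat \<Rightarrow> nat \<Rightarrow> nat \<Rightarrow> bool) \<Rightarrow> nat \<Rightarrow> nat list \<Rightarrow> nat \<Rightarrow> nat" where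
  "cnt Q a [] b = 0"
| "cnt Q a (x # xs) b = (if Q a x (hd (xs @ [b])) then 1 else 0) + cnt Q x xs b"

lemma cnt_split: "cnt Q a (l @ y # r) b = cnt Q a l y + (if Q (last (a # l)) y (hd (r @ [b])) then 1 else 0) + cnt Q y r b"
  by (induction l arbitrary: a) (auto simp: hd_append)

lemma card_front: "card {i \<in> {1..Suc m}. P i} = (if P 1 then 1 else 0) + card {i \<in> {1..m}. P (Suc i)}"
proof -
  have e: "{i \<in> {1..Suc m}. P i} = (if P 1 then {1} else {}) \<union> Suc ` {i \<in> {1..m}. P (Suc i)}"
    apply (rule set_eqI)
    subgoal for i
      apply (cases i, simp)
      subgoal for k by (cases k) (auto simp: image_iff)
      done
    done
  have "card {i \<in> {1..Suc m}. P i} = card (if P 1 then {1} else {}) + card (Suc ` {i \<in> {1..m}. P (Suc i)})"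
    unfolding e by (subst card_Un_disjoint) auto
  also have "card (Suc ` {i \<in> {1..m}. P (Suc i)}) = card {i \<in> {1..m}. P (Suc i)}"
    by (rule card_image) simp
  finally show ?thesis by (cases "P 1") simp_all
qed

lemma card_back: "card {i \<in> {1..Suc m}. P i} = card {i \<in> {1..m}. P i} + (if P (Suc m) then 1 else 0)"
proof -
  have e: "{i \<in> {1..Suc m}. P i} = {i \<in> {1..m}. P i} \<union> (if P (Suc m) then {Suc m} else {})"
    by (auto simp: le_Suc_eq)
  show ?thesis unfolding e by (subst card_Un_disjoint) auto
qed

lemma cnt_card:
  "card {i \<in> {1..length xs}. Q (pvg a xs b (i - 1)) (pvg a xs b i) (pvg a xs b (i + 1))} = cnt Q a xs b"
proof (induction xs arbitrary: a)
  case Nil then show ?case by simp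
next
  case (Cons x xs)
  have h1: "pvg a (x # xs) b 2 = hd (xs @ [b])"
    by (cases xs) (auto simp: pvg_def)
  have "{i \<in> {1..length xs}. Q (pvg a (x # xs) b (Suc i - 1)) (pvg a (x # xs) b (Suc i)) (pvg a (x # xs) b (Suc i + 1))}
      = {i \<in> {1..length xs}. Q (pvg x xs b (i - 1)) (pvg x xs b i) (pvg x xs b (i + 1))}"
  proof -
    have "\<And>i. 1 \<le> i \<Longrightarrow> pvg a (x # xs) b (Suc i - 1) = pvg x xs b (i - 1)"
      by (metis Suc_diff_1 diff_Suc_1 less_eq_Suc_le pvg_Suc zero_less_Suc less_Suc_eq_0_disj le_zero_eq not_less_eq_eq One_nat_def)
    then show ?thesis by (auto simp: pvg_Suc)
  qed
  moreover
  let ?P = "\<lambda>i. Q (pvg a (x # xs) b (i - 1)) (pvg a (x # xs) b i) (pvg a (x # xs) b (i + 1))"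
  have "card {i \<in> {1..length (x # xs)}. ?P i} = (if ?P 1 then 1 else 0) + card {i \<in> {1..length xs}. ?P (Suc i)}"
    unfolding length_Cons by (rule card_front)
  moreover have "?P 1 = Q a x (hd (xs @ [b]))" by (cases xs) (simp_all add: pvg_def)
  ultimately show ?case using Cons.IH[of x] by simp
qed

lemma cnt_card_pv:
  "card {i \<in> {1..length xs}. Q (pv xs (i - 1)) (pv xs i) (pv xs (i + 1))} = cnt Q 0 xs 0"
  using cnt_card[where Q=Q and a=0 and xs=xs and b=0] by (simp add: pv_pvg)

lemma pv_0[simp]: "pv xs 0 = 0" by (simp add: pv_def)
lemma pv_end[simp]: "pv xs (Suc (length xs)) = 0" by (simp add: pv_def)

lemma valleysV_cnt: "valleysV xs = cnt (\<lambda>a x c. a > x \<and> x < c) 0 xs 0"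
proof -
  have "{i \<in> {2..<length xs}. pv xs (i - 1) > pv xs i \<and> pv xs i < pv xs (i + 1)}
     = {i \<in> {1..length xs}. pv xs (i - 1) > pv xs i \<and> pv xs i < pv xs (i + 1)}"
    apply (rule set_eqI)
    subgoal for i by (cases "i = 1"; cases "i = length xs") auto
    done
  then show ?thesis unfolding valleysV_def cnt_card_pv[symmetric] by simp
qed

lemma peaksW_cnt: "peaksW xs = cnt (\<lambda>a x c. a < x \<and> x > c) 0 xs 0"
  unfolding peaksW_def cnt_card_pv[symmetric] by simp

lemma rdd_cnt: "rdd xs = cnt (\<lambda>a x c. a > x \<and> x > c) 0 xs 0"
proof -
  have "{i \<in> {2..length xs}. pv xs (i - 1) > pv xs i \<and> pv xs i > pv xs (i + 1)}
     = {i \<in> {1..length xs}. pv xs (i - 1) > pv xs i \<and> pv xs i > pv xs (i + 1)}"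
    apply (rule set_eqI)
    subgoal for i by (cases "i = 1") auto
    done
  then show ?thesis unfolding rdd_def cnt_card_pv[symmetric] by simp
qed

lemma lda_cnt: "lda xs = cnt (\<lambda>a x c. a < x \<and> x < c) 0 xs 0"
proof -
  have "{i \<in> {1..<length xs}. pv xs (i - 1) < pv xs i \<and> pv xs i < pv xs (i + 1)}
     = {i \<in> {1..length xs}. pv xs (i - 1) < pv xs i \<and> pv xs i < pv xs (i + 1)}"
    apply (rule set_eqI)
    subgoal for i by (cases "i = length xs") auto
    done
  then show ?thesis unfolding lda_def cnt_card_pv[symmetric] by simp
qed

lemma asc_cnt: "asc xs = cnt (\<lambda>a x c. x < c) 0 xs 0"
proof -
  have "{i \<in> {1..<length xs}. pv xs i < pv xs (i + 1)}
     = {i \<in> {1..length xs}. pv xs i < pv xs (i + 1)}"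
    apply (rule set_eqI)
    subgoal for i by (cases "i = length xs") auto
    done
  then show ?thesis unfolding asc_def using cnt_card_pv[where Q="\<lambda>a x c. x < c" and xs=xs] by simp
qed

lemma des_cnt:
  assumes "xs \<noteq> []" "last xs > 0"
  shows "des xs + 1 = cnt (\<lambda>a x c. x > c) 0 xs 0"
proof -
  obtain m where m: "length xs = Suc m" using assms(1) by (cases xs) auto
  have lst: "pv xs (Suc m) > 0" using assms m by (simp add: pv_def last_conv_nth)
  have lst2: "pv xs (Suc (Suc m)) = 0" using m by (simp add: pv_def)
  have "{i \<in> {1..<length xs}. pv xs i > pv xs (i + 1)} = {i \<in> {1..m}. pv xs i > pv xs (i + 1)}"
    using m by auto
  moreover have "card {i \<in> {1..Suc m}. pv xs i > pv xs (i + 1)} = card {i \<in> {1..m}. pv xs i > pv xs (i + 1)} + 1"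
    using card_back[where m=m and P="\<lambda>i. pv xs i > pv xs (i + 1)"] lst lst2 m by simp
  ultimately show ?thesis unfolding des_def
    using cnt_card_pv[where Q="\<lambda>a x c. x > c" and xs=xs] m by simp
qed

lemma ball_pv: "(\<forall>j\<in>{1..length xs}. P (pv xs j)) \<longleftrightarrow> (\<forall>y\<in>set xs. P y)"
proof
  assume a: "\<forall>j\<in>{1..length xs}. P (pv xs j)"
  show "\<forall>y\<in>set xs. P y"
  proof
    fix y assume "y \<in> set xs"
    then obtain i where i: "i < length xs" "xs ! i = y" by (auto simp: in_set_conv_nth)
    then have "pv xs (Suc i) = y" by (simp add: pv_def)
    then show "P y" using a i by force
  qed
next
  assume a: "\<forall>y\<in>set xs. P y"
  show "\<forall>j\<in>{1..length xs}. P (pv xs j)"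
    using a by (auto simp: pv_def)
qed

lemma LRmax_snoc: "LRmax (xs @ [z]) = LRmax xs + (if \<forall>y\<in>set xs. y < z then 1 else 0)"
proof -
  let ?m = "length xs"
  have p: "\<And>k. k \<le> ?m \<Longrightarrow> pv (xs @ [z]) k = pv xs k" by (auto simp: pv_def nth_append)
  have pz: "pv (xs @ [z]) (Suc ?m) = z" by (simp add: pv_def)
  have e1: "{i \<in> {1..?m}. \<forall>j\<in>{1..<i}. pv (xs @ [z]) j < pv (xs @ [z]) i}
     = {i \<in> {1..?m}. \<forall>j\<in>{1..<i}. pv xs j < pv xs i}"
    using p by auto
  have e2: "(\<forall>j\<in>{1..<Suc ?m}. pv (xs @ [z]) j < pv (xs @ [z]) (Suc ?m)) = (\<forall>y\<in>set xs. y < z)"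
  proof -
    have "(\<forall>j\<in>{1..<Suc ?m}. pv (xs @ [z]) j < pv (xs @ [z]) (Suc ?m)) = (\<forall>j\<in>{1..?m}. pv xs j < z)"
      using p pz by auto
    also have "\<dots> = (\<forall>y\<in>set xs. y < z)" by (rule ball_pv)
    finally show ?thesis .
  qed
  show ?thesis
    unfolding LRmax_def length_append_singleton card_back e1 e2 by simp
qed

lemma pv_Cons_Suc: "pv (z # xs) (Suc k) = (if k = 0 then z else pv xs k)"
  by (simp add: pv_pvg pvg_Suc) (simp add: pvg_def)

lemma shift_ioc: "{Suc i<..Suc m} = Suc ` {i<..m}"
  apply (rule set_eqI)
  subgoal for x by (cases x) auto
  done

lemma RLmax_cons: "RLmax (z # xs) = RLmax xs + (if \<forall>y\<in>set xs. y < z then 1 else 0)"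
proof -
  let ?m = "length xs"
  let ?P = "\<lambda>i. \<forall>j\<in>{i<..Suc ?m}. pv (z # xs) j < pv (z # xs) i"
  have "RLmax (z # xs) = (if ?P 1 then 1 else 0) + card {i \<in> {1..?m}. ?P (Suc i)}"
    unfolding RLmax_def length_Cons by (rule card_front)
  moreover have "?P 1 = (\<forall>y\<in>set xs. y < z)"
  proof -
    have "?P 1 = (\<forall>j\<in>{0<..?m}. pv (z # xs) (Suc j) < z)"
      using shift_ioc[of 0 ?m] pv_Cons_Suc[of z xs 0] by simp
    also have "\<dots> = (\<forall>j\<in>{1..?m}. pv xs j < z)"
      by (auto simp: pv_Cons_Suc)
    also have "\<dots> = (\<forall>y\<in>set xs. y < z)" by (rule ball_pv)
    finally show ?thesis .
  qed
  moreover have "{i \<in> {1..?m}. ?P (Suc i)} = {i \<in> {1..?m}. \<forall>j\<in>{i<..?m}. pv xs j < pv xs i}"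
  proof -
    have "\<And>i. 1 \<le> i \<Longrightarrow> ?P (Suc i) = (\<forall>j\<in>{i<..?m}. pv xs j < pv xs i)"
      using shift_ioc by (auto simp: pv_Cons_Suc)
    then show ?thesis by auto
  qed
  ultimately show ?thesis unfolding RLmax_def by simp
qed

lemma LRmax_max:
  assumes "\<forall>y\<in>set l \<union> set r. y < M"
  shows "LRmax (l @ M # r) = LRmax l + 1"
  using assms
proof (induction r rule: rev_induct)
  case Nil then show ?case using LRmax_snoc[of l M] by simp
next
  case (snoc z r)
  have "LRmax (l @ M # r @ [z]) = LRmax ((l @ M # r) @ [z])" by simp
  also have "\<dots> = LRmax (l @ M # r)" using snoc.prems by (subst LRmax_snoc) auto
  finally show ?case using snoc by simp
qed

lemma RLmax_max:
  assumes "\<forall>y\<in>set l \<union> set r. y < M"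
  shows "RLmax (l @ M # r) = RLmax r + 1"
  using assms
proof (induction l)
  case Nil then show ?case using RLmax_cons[of M r] by simp
next
  case (Cons z l)
  have "RLmax ((z # l) @ M # r) = RLmax (z # (l @ M # r))" by simp
  also have "\<dots> = RLmax (l @ M # r)" using Cons.prems by (subst RLmax_cons) auto
  finally show ?case using Cons by simp
qed

definition tP :: "'a \<Rightarrow> 'a \<Rightarrow> 'a \<Rightarrow> 'a \<Rightarrow> bool \<Rightarrow> bool \<Rightarrow> 'a" where
  "tP u1 u2 u3 u4 p q = (if p then (if q then u4 else u2) else (if q then u1 else u3))"

lemma tP_simps [simp]: "tP u1 u2 u3 u4 True True = u4" "tP u1 u2 u3 u4 True False = u2"
  "tP u1 u2 u3 u4 False True = u1" "tP u1 u2 u3 u4 False False = u3"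
  by (simp_all add: tP_def)

lemma lw_P:
  fixes u1 u2 u3 u4 :: "'a::comm_ring_1"
  assumes "distinct xs" "a \<notin> set xs" "b \<notin> set xs"
  shows "lw (tP u1 u2 u3 u4) a xs b =
    u1 ^ cnt (\<lambda>a x c. a > x \<and> x < c) a xs b * u2 ^ cnt (\<lambda>a x c. a < x \<and> x > c) a xs b *
    u3 ^ cnt (\<lambda>a x c. a > x \<and> x > c) a xs b * u4 ^ cnt (\<lambda>a x c. a < x \<and> x < c) a xs b"
  using assms
proof (induction xs arbitrary: a)
  case Nil then show ?case by simp
next
  case (Cons x xs)
  let ?c = "hd (xs @ [b])"
  have ne: "x \<noteq> a" "x \<noteq> ?c" using Cons.prems by (cases xs; auto)+
  have IH: "lw (tP u1 u2 u3 u4) x xs b =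
    u1 ^ cnt (\<lambda>a x c. a > x \<and> x < c) x xs b * u2 ^ cnt (\<lambda>a x c. a < x \<and> x > c) x xs b *
    u3 ^ cnt (\<lambda>a x c. a > x \<and> x > c) x xs b * u4 ^ cnt (\<lambda>a x c. a < x \<and> x < c) x xs b"
    using Cons by auto
  show ?case
  proof (cases "a < x"; cases "x < ?c")
    assume "a < x" "x < ?c" then show ?thesis using IH ne by (simp add: mult_ac)
  next
    assume "a < x" "\<not> x < ?c" then show ?thesis using IH ne by (simp add: mult_ac)
  next
    assume "\<not> a < x" "x < ?c" then show ?thesis using IH ne by (simp add: mult_ac)
  next
    assume "\<not> a < x" "\<not> x < ?c" then show ?thesis using IH ne by (simp add: mult_ac)
  qed
qed

lemma lw_A:
  fixes x y :: "'a::comm_ring_1"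
  assumes "distinct xs" "b \<notin> set xs"
  shows "lw (\<lambda>p q. if q then x else y) a xs b =
    x ^ cnt (\<lambda>a x c. x < c) a xs b * y ^ cnt (\<lambda>a x c. x > c) a xs b"
  using assms
proof (induction xs arbitrary: a)
  case Nil then show ?case by simp
next
  case (Cons z xs)
  let ?c = "hd (xs @ [b])"
  have ne: "z \<noteq> ?c" using Cons.prems by (cases xs; auto)
  have IH: "lw (\<lambda>p q. if q then x else y) z xs b =
    x ^ cnt (\<lambda>a x c. x < c) z xs b * y ^ cnt (\<lambda>a x c. x > c) z xs b"
    using Cons by auto
  show ?case
  proof (cases "z < ?c")
    assume "z < ?c" then show ?thesis using IH ne by (simp add: mult_ac)
  next
    assume "\<not> z < ?c" then show ?thesis using IH ne by (simp add: mult_ac)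
  qed
qed



fun hh :: "(bool \<Rightarrow> bool \<Rightarrow> 'a::comm_ring_1) \<Rightarrow> nat \<Rightarrow> 'a" where
  "hh t 0 = 1"
| "hh t (Suc n) = (\<Sum>j=0..n. of_nat (n choose j) * (hh t j * t (0 < j) (n - j = 0) * hh t (n - j)))"

lemma Max_facts:
  assumes "finite S" "S \<noteq> {}"
  shows "Max S \<in> S" "\<forall>z\<in>S - {Max S}. z < Max S" "card S = Suc (card (S - {Max S}))"
proof -
  show "Max S \<in> S" using assms by simp
  show "\<forall>z\<in>S - {Max S}. z < Max S" using assms by (auto simp: order.strict_iff_order)
  have "card S > 0" using assms card_gt_0_iff by blast
  then show "card S = Suc (card (S - {Max S}))" using assms by (simp add: card.remove)
qed

lemma arr_props:
  assumes "l \<in> arr T" "r \<in> arr (S - {M} - T)"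
  shows "set l = T" "set r = S - {M} - T" "distinct l" "distinct r"
    "l = [] \<longleftrightarrow> card T = 0" "r = [] \<longleftrightarrow> card (S - {M} - T) = 0"
proof -
  show sl: "set l = T" and sr: "set r = S - {M} - T" and "distinct l" "distinct r"
    using assms unfolding arr_def by auto
  show "l = [] \<longleftrightarrow> card T = 0" unfolding sl[symmetric] by (simp add: card_eq_0_iff)
  show "r = [] \<longleftrightarrow> card (S - {M} - T) = 0" unfolding sr[symmetric] by (simp add: card_eq_0_iff)
qed

lemma hsum:
  assumes "finite S" "\<forall>z\<in>S. z < a \<and> z < b"
  shows "(\<Sum>xs\<in>arr S. lw t a xs b) = hh t (card S)"
  using assms
proof (induction "card S" arbitrary: S a b rule: less_induct)
  case less
  show ?case
  proof (cases "S = {}")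
    case True then show ?thesis by (simp add: arr_empty)
  next
    case False
    let ?M = "Max S"
    note MF = Max_facts[OF less.prems(1) False]
    let ?n = "card (S - {?M})"
    have "(\<Sum>xs\<in>arr S. lw t a xs b) = (\<Sum>k=0..?n. of_nat (?n choose k) *
            (hh t k * t (0 < k) (?n - k = 0) * hh t (?n - k)))"
    proof (rule decomp_gen[where GA="\<lambda>l. lw t a l ?M" and GB="\<lambda>r. lw t ?M r b" and c="\<lambda>j k. t (0 < j) (k = 0)"])
      show "finite S" "?M \<in> S" using less.prems MF by auto
    next
      fix T l r assume T: "T \<subseteq> S - {?M}" and l: "l \<in> arr T" and r: "r \<in> arr (S - {?M} - T)"
      note P = arr_props[OF l r]
      have e1: "(last (a # l) < ?M) = (0 < card T)"
      proof (cases "l = []")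
        case True then show ?thesis using P less.prems MF by auto
      next
        case False
        then have "last l \<in> T" using P(1) last_in_set by blast
        then show ?thesis using False P T MF by (auto simp del: P(5))
      qed
      have e2: "(?M < hd (r @ [b])) = (card (S - {?M} - T) = 0)"
      proof (cases "r = []")
        case True then show ?thesis using P less.prems MF by auto
      next
        case False
        then have "hd r \<in> S - {?M} - T" using P(2) hd_in_set by blast
        then have "hd r < ?M" using MF(2) by blast
        then show ?thesis using False P(6) by (simp add: hd_append)
      qed
      show "lw t a (l @ ?M # r) b = lw t a l ?M * t (0 < card T) (card (S - {?M} - T) = 0) * lw t ?M r b"
        by (simp only: lw_split e1 e2)
    next
      fix T assume T: "T \<subseteq> S - {?M}"
      have f: "finite T" using T less.prems(1) finite_subset by blast
      have z: "\<forall>z\<in>T. z < a \<and> z < ?M" using T less.prems(2) MF(2) by blast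
      have c: "card T < card S"
      proof -
        have "card T \<le> card (S - {?M})" using T less.prems(1) by (intro card_mono) auto
        then show ?thesis using MF(3) by simp
      qed
      show "(\<Sum>l\<in>arr T. lw t a l ?M) = hh t (card T)"
        by (rule less.hyps[OF c f z])
    next
      fix T assume T: "T \<subseteq> S - {?M}"
      have f: "finite (S - {?M} - T)" using less.prems(1) by simp
      have z: "\<forall>z\<in>S - {?M} - T. z < ?M \<and> z < b" using less.prems(2) MF(2) by blast
      have c: "card (S - {?M} - T) < card S"
      proof -
        have "card (S - {?M} - T) \<le> card (S - {?M})" using less.prems(1) by (intro card_mono) auto
        then show ?thesis using MF(3) by simp
      qed
      show "(\<Sum>r\<in>arr (S - {?M} - T). lw t ?M r b) = hh t (card (S - {?M} - T))"
        by (rule less.hyps[OF c f z])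
    qed
    also have "\<dots> = hh t (card S)" using MF(3) by simp
    finally show ?thesis .
  qed
qed

lemma card_lt_aux:
  assumes "finite S" "card S = Suc (card (S - {M}))" "A \<subseteq> S - {M}"
  shows "card A < card S" "finite A"
proof -
  have "card A \<le> card (S - {M})" using assms by (intro card_mono) auto
  then show "card A < card S" using assms(2) by simp
  show "finite A" using assms finite_subset by blast
qed

lemma fsum:
  assumes "finite S" "0 \<notin> S" "\<forall>z\<in>S. z < b"
  shows "(\<Sum>xs\<in>arr S. \<alpha> ^ LRmax xs * lw t 0 xs b) = E (\<lambda>m. \<alpha> * t True (m = 0) * hh t m) (card S)"
  using assms
proof (induction "card S" arbitrary: S b rule: less_induct)
  case less
  show ?case
  proof (cases "S = {}")
    case True then show ?thesis by (simp add: arr_empty LRmax_def)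
  next
    case False
    let ?M = "Max S"
    note MF = Max_facts[OF less.prems(1) False]
    let ?n = "card (S - {?M})"
    let ?af = "\<lambda>m. \<alpha> * t True (m = 0) * hh t m"
    have "(\<Sum>xs\<in>arr S. \<alpha> ^ LRmax xs * lw t 0 xs b) = (\<Sum>k=0..?n. of_nat (?n choose k) *
            (E ?af k * (\<alpha> * t True (?n - k = 0)) * hh t (?n - k)))"
    proof (rule decomp_gen[where GA="\<lambda>l. \<alpha> ^ LRmax l * lw t 0 l ?M" and GB="\<lambda>r. lw t ?M r b"
          and c="\<lambda>j k. \<alpha> * t True (k = 0)"])
      show "finite S" "?M \<in> S" using less.prems MF by auto
    next
      fix T l r assume T: "T \<subseteq> S - {?M}" and l: "l \<in> arr T" and r: "r \<in> arr (S - {?M} - T)"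
      note P = arr_props[OF l r]
      have e1: "(last (0 # l) < ?M) = True"
      proof (cases "l = []")
        case True
        have "?M \<noteq> 0" using MF less.prems(2) by metis
        then show ?thesis using True by simp
      next
        case False
        then have "last l \<in> T" using P(1) last_in_set by blast
        then have "last l < ?M" using T MF(2) by blast
        then show ?thesis using False by simp
      qed
      have e2: "(?M < hd (r @ [b])) = (card (S - {?M} - T) = 0)"
      proof (cases "r = []")
        case True then show ?thesis using P less.prems MF by auto
      next
        case False
        then have "hd r \<in> S - {?M} - T" using P(2) hd_in_set by blast
        then have "hd r < ?M" using MF(2) by blast
        then show ?thesis using False P(6) by (simp add: hd_append)
      qed
      have LR: "LRmax (l @ ?M # r) = LRmax l + 1"
        by (rule LRmax_max) (use P(1,2) T MF(2) in blast)
      show "\<alpha> ^ LRmax (l @ ?M # r) * lw t 0 (l @ ?M # r) b =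
         \<alpha> ^ LRmax l * lw t 0 l ?M * (\<alpha> * t True (card (S - {?M} - T) = 0)) * lw t ?M r b"
        by (simp only: lw_split e1 e2 LR power_add power_one_right) (simp add: mult_ac)
    next
      fix T assume T: "T \<subseteq> S - {?M}"
      note cf = card_lt_aux[OF less.prems(1) MF(3) T]
      have z: "0 \<notin> T" "\<forall>z\<in>T. z < ?M" using T less.prems(2) MF(2) by blast+
      show "(\<Sum>l\<in>arr T. \<alpha> ^ LRmax l * lw t 0 l ?M) = E ?af (card T)"
        by (rule less.hyps[OF cf z])
    next
      fix T assume T: "T \<subseteq> S - {?M}"
      have "S - {?M} - T \<subseteq> S - {?M}" by blast
      note cf = card_lt_aux[OF less.prems(1) MF(3) this]
      have z: "\<forall>z\<in>S - {?M} - T. z < ?M \<and> z < b" using less.prems(3) MF(2) by blast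
      show "(\<Sum>r\<in>arr (S - {?M} - T). lw t ?M r b) = hh t (card (S - {?M} - T))"
        by (rule hsum[OF cf(2) z])
    qed
    also have "\<dots> = E ?af (Suc ?n)"
      by (simp only: E.simps) (rule sum.cong, simp_all add: mult_ac)
    also have "\<dots> = E ?af (card S)" using MF(3) by simp
    finally show ?thesis .
  qed
qed

lemma gsum:
  assumes "finite S" "0 \<notin> S" "\<forall>z\<in>S. z < a"
  shows "(\<Sum>xs\<in>arr S. \<beta> ^ RLmax xs * lw t a xs 0) = E (\<lambda>m. \<beta> * t (0 < m) False * hh t m) (card S)"
  using assms
proof (induction "card S" arbitrary: S a rule: less_induct)
  case less
  show ?case
  proof (cases "S = {}")
    case True then show ?thesis by (simp add: arr_empty RLmax_def)
  next
    case False
    let ?M = "Max S"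
    note MF = Max_facts[OF less.prems(1) False]
    let ?n = "card (S - {?M})"
    let ?ag = "\<lambda>m. \<beta> * t (0 < m) False * hh t m"
    have "(\<Sum>xs\<in>arr S. \<beta> ^ RLmax xs * lw t a xs 0) = (\<Sum>k=0..?n. of_nat (?n choose k) *
            (hh t k * (\<beta> * t (0 < k) False) * E ?ag (?n - k)))"
    proof (rule decomp_gen[where GA="\<lambda>l. lw t a l ?M" and GB="\<lambda>r. \<beta> ^ RLmax r * lw t ?M r 0"
          and c="\<lambda>j k. \<beta> * t (0 < j) False"])
      show "finite S" "?M \<in> S" using less.prems MF by auto
    next
      fix T l r assume T: "T \<subseteq> S - {?M}" and l: "l \<in> arr T" and r: "r \<in> arr (S - {?M} - T)"
      note P = arr_props[OF l r]
      have e1: "(last (a # l) < ?M) = (0 < card T)"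
      proof (cases "l = []")
        case True then show ?thesis using P less.prems MF by auto
      next
        case False
        then have "last l \<in> T" using P(1) last_in_set by blast
        then have "last l < ?M" using T MF(2) by blast
        then show ?thesis using False P(5) by simp
      qed
      have e2: "(?M < hd (r @ [0])) = False"
      proof (cases "r = []")
        case True then show ?thesis by simp
      next
        case False
        then have "hd r \<in> S - {?M} - T" using P(2) hd_in_set by blast
        then have "hd r < ?M" using MF(2) by blast
        then show ?thesis using False by (simp add: hd_append)
      qed
      have RL: "RLmax (l @ ?M # r) = RLmax r + 1"
        by (rule RLmax_max) (use P(1,2) T MF(2) in blast)
      show "\<beta> ^ RLmax (l @ ?M # r) * lw t a (l @ ?M # r) 0 =
         lw t a l ?M * (\<beta> * t (0 < card T) False) * (\<beta> ^ RLmax r * lw t ?M r 0)"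
        by (simp only: lw_split e1 e2 RL power_add power_one_right) (simp add: mult_ac)
    next
      fix T assume T: "T \<subseteq> S - {?M}"
      note cf = card_lt_aux[OF less.prems(1) MF(3) T]
      have z: "\<forall>z\<in>T. z < a \<and> z < ?M" using T less.prems(3) MF(2) by blast
      show "(\<Sum>l\<in>arr T. lw t a l ?M) = hh t (card T)"
        by (rule hsum[OF cf(2) z])
    next
      fix T assume T: "T \<subseteq> S - {?M}"
      have "S - {?M} - T \<subseteq> S - {?M}" by blast
      note cf = card_lt_aux[OF less.prems(1) MF(3) this]
      have z: "0 \<notin> S - {?M} - T" "\<forall>z\<in>S - {?M} - T. z < ?M" using less.prems(2) MF(2) by blast+
      show "(\<Sum>r\<in>arr (S - {?M} - T). \<beta> ^ RLmax r * lw t ?M r 0) = E ?ag (card (S - {?M} - T))"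
        by (rule less.hyps[OF cf z])
    qed
    also have "\<dots> = conv ?ag (E ?ag) ?n"
      unfolding conv_def by (rule sum.cong) (simp_all add: mult_ac)
    also have "\<dots> = E ?ag (Suc ?n)" by (simp only: conv_comm[of ?ag] E_Suc_conv)
    also have "\<dots> = E ?ag (card S)" using MF(3) by simp
    finally show ?thesis .
  qed
qed

lemma top_sum:
  fixes F :: "nat list \<Rightarrow> 'a::comm_ring_1"
  assumes F: "\<And>l r. distinct (l @ Suc n # r) \<Longrightarrow> set (l @ Suc n # r) = {1..Suc n} \<Longrightarrow>
      F (l @ Suc n # r) = (\<alpha> ^ LRmax l * lw t 0 l (Suc n)) * (\<beta> ^ RLmax r * lw t (Suc n) r 0)"
  shows "(\<Sum>\<sigma>\<in>perms (Suc n). F \<sigma>) =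
     E (\<lambda>m. \<alpha> * t True (m = 0) * hh t m + \<beta> * t (0 < m) False * hh t m) n"
proof -
  let ?S = "{1..Suc n}"
  let ?M = "Suc n"
  let ?af = "\<lambda>m. \<alpha> * t True (m = 0) * hh t m"
  let ?ag = "\<lambda>m. \<beta> * t (0 < m) False * hh t m"
  have pe: "perms (Suc n) = arr ?S" unfolding perms_def arr_def by simp
  have SM: "?S - {?M} = {1..n}" by auto
  have "(\<Sum>\<sigma>\<in>arr ?S. F \<sigma>) = (\<Sum>k=0..card (?S - {?M}). of_nat (card (?S - {?M}) choose k) *
            (E ?af k * 1 * E ?ag (card (?S - {?M}) - k)))"
  proof (rule decomp_gen[where GA="\<lambda>l. \<alpha> ^ LRmax l * lw t 0 l ?M" and GB="\<lambda>r. \<beta> ^ RLmax r * lw t ?M r 0"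
        and c="\<lambda>j k. 1"])
    show "finite ?S" "?M \<in> ?S" by auto
  next
    fix T l r assume T: "T \<subseteq> ?S - {?M}" and l: "l \<in> arr T" and r: "r \<in> arr (?S - {?M} - T)"
    note P = arr_props[OF l r]
    have "distinct (l @ ?M # r)" using P T by auto
    moreover have "set (l @ ?M # r) = ?S" using P T by auto
    ultimately show "F (l @ ?M # r) = \<alpha> ^ LRmax l * lw t 0 l ?M * 1 * (\<beta> ^ RLmax r * lw t ?M r 0)"
      using F by simp
  next
    fix T assume T: "T \<subseteq> ?S - {?M}"
    have "finite T" using T finite_subset by blast
    moreover have "0 \<notin> T" "\<forall>z\<in>T. z < ?M" using T by auto
    ultimately show "(\<Sum>l\<in>arr T. \<alpha> ^ LRmax l * lw t 0 l ?M) = E ?af (card T)"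
      by (rule fsum)
  next
    fix T assume T: "T \<subseteq> ?S - {?M}"
    have "finite (?S - {?M} - T)" by simp
    moreover have "0 \<notin> ?S - {?M} - T" "\<forall>z\<in>?S - {?M} - T. z < ?M" by auto
    ultimately show "(\<Sum>r\<in>arr (?S - {?M} - T). \<beta> ^ RLmax r * lw t ?M r 0) = E ?ag (card (?S - {?M} - T))"
      by (rule gsum)
  qed
  also have "\<dots> = conv (E ?af) (E ?ag) n"
    unfolding SM conv_def by (rule sum.cong) (simp_all add: mult_ac)
  also have "\<dots> = E (\<lambda>m. ?af m + ?ag m) n" by (rule conv_E)
  finally show ?thesis using pe by simp
qed

lemma P_summand:
  fixes u1 u2 u3 u4 \<alpha> \<beta> :: "'a::comm_ring_1"
  assumes d: "distinct (l @ M # r)" and z: "0 \<notin> set (l @ M # r)" and m: "\<forall>y\<in>set l \<union> set r. y < M"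
  shows "u1 ^ valleysV (l @ M # r) * u2 ^ (peaksW (l @ M # r) - 1) * u3 ^ rdd (l @ M # r) *
     u4 ^ lda (l @ M # r) * \<alpha> ^ (LRmax (l @ M # r) - 1) * \<beta> ^ (RLmax (l @ M # r) - 1) =
     (\<alpha> ^ LRmax l * lw (tP u1 u2 u3 u4) 0 l M) * (\<beta> ^ RLmax r * lw (tP u1 u2 u3 u4) M r 0)"
proof -
  have L: "last (0 # l) < M"
  proof (cases "l = []")
    case True then show ?thesis using z by auto
  next
    case False then show ?thesis using m last_in_set by auto
  qed
  have R: "hd (r @ [0]) < M"
  proof (cases "r = []")
    case True then show ?thesis using z by auto
  next
    case False then show ?thesis using m hd_in_set by (auto simp: hd_append)
  qed
  have dl: "distinct l" "0 \<notin> set l" "M \<notin> set l" and dr: "distinct r" "0 \<notin> set r" "M \<notin> set r"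
    using d z by auto
  show ?thesis
    unfolding valleysV_cnt peaksW_cnt rdd_cnt lda_cnt LRmax_max[OF m] RLmax_max[OF m]
      cnt_split lw_P[OF dl(1,2,3)] lw_P[OF dr(1,3,2)]
    using L R by (simp add: power_add mult_ac)
qed

lemma A_summand:
  fixes x y a b :: "'a::comm_ring_1"
  assumes d: "distinct (l @ M # r)" and z: "0 \<notin> set (l @ M # r)" and m: "\<forall>y\<in>set l \<union> set r. y < M"
  shows "x ^ asc (l @ M # r) * y ^ des (l @ M # r) * a ^ (LRmax (l @ M # r) - 1) * b ^ (RLmax (l @ M # r) - 1) =
     (a ^ LRmax l * lw (\<lambda>p q. if q then x else y) 0 l M) * (b ^ RLmax r * lw (\<lambda>p q. if q then x else y) M r 0)"
proof -
  have R: "hd (r @ [0]) < M"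
  proof (cases "r = []")
    case True then show ?thesis using z by auto
  next
    case False then show ?thesis using m hd_in_set by (auto simp: hd_append)
  qed
  have dl: "distinct l" "M \<notin> set l" and dr: "distinct r" "0 \<notin> set r"
    using d z by auto
  have lp: "last (l @ M # r) > 0"
  proof -
    have "last (l @ M # r) \<in> set (l @ M # r)" by (rule last_in_set) simp
    then show ?thesis using z by (metis gr0I)
  qed
  have des: "des (l @ M # r) = cnt (\<lambda>a x c. x > c) 0 l M + cnt (\<lambda>a x c. x > c) M r 0"
    using des_cnt[of "l @ M # r"] lp R by (simp add: cnt_split)
  have asc: "asc (l @ M # r) = cnt (\<lambda>a x c. x < c) 0 l M + cnt (\<lambda>a x c. x < c) M r 0"
    using R by (simp add: asc_cnt cnt_split)
  show ?thesis
    unfolding des asc LRmax_max[OF m] RLmax_max[OF m] lw_A[OF dl] lw_A[OF dr]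
    using dr(2) by (simp add: power_add mult_ac)
qed

lemma perm_facts:
  assumes "distinct (l @ Suc n # r)" "set (l @ Suc n # r) = {1..Suc n}"
  shows "0 \<notin> set (l @ Suc n # r)" "\<forall>y\<in>set l \<union> set r. y < Suc n"
proof -
  show "0 \<notin> set (l @ Suc n # r)" using assms(2) by auto
  have "\<forall>y\<in>set l \<union> set r. y \<noteq> Suc n" using assms(1) by auto
  moreover have "\<forall>y\<in>set l \<union> set r. y \<le> Suc n" using assms(2) by auto
  ultimately show "\<forall>y\<in>set l \<union> set r. y < Suc n" by (meson le_neq_implies_less)
qed

lemma Ppoly_E:
  fixes u1 u2 u3 u4 \<alpha> \<beta> :: "'a::comm_ring_1"
  shows "Ppoly n u1 u2 u3 u4 \<alpha> \<beta> = E (\<lambda>m. \<alpha> * tP u1 u2 u3 u4 True (m = 0) * hh (tP u1 u2 u3 u4) m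
      + \<beta> * tP u1 u2 u3 u4 (0 < m) False * hh (tP u1 u2 u3 u4) m) n"
  unfolding Ppoly_def Suc_eq_plus1[symmetric]
proof (rule top_sum)
  fix l r assume a: "distinct (l @ Suc n # r)" "set (l @ Suc n # r) = {1..Suc n}"
  note pf = perm_facts[OF a]
  show "u1 ^ valleysV (l @ Suc n # r) * u2 ^ (peaksW (l @ Suc n # r) - 1) * u3 ^ rdd (l @ Suc n # r) *
     u4 ^ lda (l @ Suc n # r) * \<alpha> ^ (LRmax (l @ Suc n # r) - 1) * \<beta> ^ (RLmax (l @ Suc n # r) - 1) =
     (\<alpha> ^ LRmax l * lw (tP u1 u2 u3 u4) 0 l (Suc n)) * (\<beta> ^ RLmax r * lw (tP u1 u2 u3 u4) (Suc n) r 0)"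
    by (rule P_summand[OF a(1) pf])
qed

lemma Apoly_E:
  fixes x y a b :: "'a::comm_ring_1"
  shows "Apoly n x y a b = E (\<lambda>m. a * (\<lambda>p q. if q then x else y) True (m = 0) * hh (\<lambda>p q. if q then x else y) m
      + b * (\<lambda>p q. if q then x else y) (0 < m) False * hh (\<lambda>p q. if q then x else y) m) n"
  unfolding Apoly_def Suc_eq_plus1[symmetric]
proof (rule top_sum)
  fix l r assume as: "distinct (l @ Suc n # r)" "set (l @ Suc n # r) = {1..Suc n}"
  note pf = perm_facts[OF as]
  show "x ^ asc (l @ Suc n # r) * y ^ des (l @ Suc n # r) * a ^ (LRmax (l @ Suc n # r) - 1) * b ^ (RLmax (l @ Suc n # r) - 1) =
     (a ^ LRmax l * lw (\<lambda>p q. if q then x else y) 0 l (Suc n)) * (b ^ RLmax r * lw (\<lambda>p q. if q then x else y) (Suc n) r 0)"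
    by (rule A_summand[OF as(1) pf])
qed

lemma hh_rec2:
  "t True False * hh t (Suc (Suc n)) = (t False False + t True True) * (t True False * hh t (Suc n)) +
     (\<Sum>j=Suc 0..n. of_nat (Suc n choose j) * ((t True False * hh t j) * (t True False * hh t (Suc n - j))))"
proof -
  have "hh t (Suc (Suc n)) = (\<Sum>j=0..Suc n. of_nat (Suc n choose j) * (hh t j * t (0 < j) (Suc n - j = 0) * hh t (Suc n - j)))"
    by (rule hh.simps(2))
  also have "\<dots> = t False False * hh t (Suc n) + (\<Sum>j=Suc 0..n. of_nat (Suc n choose j) * (hh t j * t (0 < j) (Suc n - j = 0) * hh t (Suc n - j)))
       + t True True * hh t (Suc n)"
    by (simp del: hh.simps add: hh.simps(1) sum.atLeast0_atMost_Suc sum.atLeast_Suc_atMost mult_ac)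
  also have "(\<Sum>j=Suc 0..n. of_nat (Suc n choose j) * (hh t j * t (0 < j) (Suc n - j = 0) * hh t (Suc n - j)))
     = (\<Sum>j=Suc 0..n. of_nat (Suc n choose j) * (hh t j * t True False * hh t (Suc n - j)))"
    by (rule sum.cong) auto
  finally show ?thesis
    by (simp del: hh.simps add: hh.simps(1) algebra_simps sum_distrib_left)
qed

lemma hh_K:
  assumes "t1 True False * t1 False True = t2 True False * t2 False True"
    "t1 False False + t1 True True = t2 False False + t2 True True"
  shows "0 < m \<Longrightarrow> t1 True False * hh t1 m = t2 True False * hh t2 m"
proof (induction m rule: less_induct)
  case (less m)
  then obtain k where m: "m = Suc k" by (cases m) auto
  show ?case
  proof (cases k)
    case 0 then show ?thesis using m assms(1) by simp
  next
    case (Suc n)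
    have IH: "\<And>j. 0 < j \<Longrightarrow> j \<le> Suc n \<Longrightarrow> t1 True False * hh t1 j = t2 True False * hh t2 j"
      using less.IH m Suc by auto
    have "(\<Sum>j=Suc 0..n. of_nat (Suc n choose j) * ((t1 True False * hh t1 j) * (t1 True False * hh t1 (Suc n - j))))
       = (\<Sum>j=Suc 0..n. of_nat (Suc n choose j) * ((t2 True False * hh t2 j) * (t2 True False * hh t2 (Suc n - j))))"
      by (rule sum.cong) (auto simp: IH)
    then show ?thesis
      unfolding m Suc hh_rec2 using IH[of "Suc n"] assms(2) by simp
  qed
qed

theorem theorem6p2:
  fixes x y u1 u2 u3 u4 \<alpha> \<beta> :: "'a::comm_ring_1" and n :: nat
  assumes "x + y = u3 + u4" and "x * y = u1 * u2"
  shows "Ppoly n u1 u2 u3 u4 \<alpha> \<beta>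
           = (\<Sum>k=0..n. of_nat (n choose k) * Apoly k x y 0 (\<alpha> + \<beta>)
                 * (\<alpha> * x - \<beta> * y + (\<beta> - \<alpha>) * u3) ^ (n - k))
       \<and> Ppoly n u1 u2 u3 u4 \<alpha> \<beta>
           = (\<Sum>k=0..n. of_nat (n choose k) * Apoly k x y (\<alpha> + \<beta>) 0
                 * (\<alpha> * y - \<beta> * x + (\<beta> - \<alpha>) * u3) ^ (n - k))"
proof -
  let ?tp = "tP u1 u2 u3 u4"
  let ?ta = "\<lambda>p q. if q then x else (y::'a)"
  let ?aP = "\<lambda>m. \<alpha> * ?tp True (m = 0) * hh ?tp m + \<beta> * ?tp (0 < m) False * hh ?tp m"
  let ?aA = "\<lambda>a b m. a * ?ta True (m = 0) * hh ?ta m + b * ?ta (0 < m) False * hh ?ta m"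
  have u4: "u4 = x + y - u3" using assms(1) by (simp add: algebra_simps)
  have K: "\<And>m. 0 < m \<Longrightarrow> u2 * hh ?tp m = y * hh ?ta m"
  proof -
    fix m :: nat assume m: "0 < m"
    have "?tp True False * hh ?tp m = ?ta True False * hh ?ta m"
      by (rule hh_K[OF _ _ m]) (use assms in \<open>simp_all add: mult.commute add.commute\<close>)
    then show "u2 * hh ?tp m = y * hh ?ta m" by simp
  qed
  have gen: "\<And>a b c. (\<forall>m. ?aA a b m + (if m = 0 then c else 0) = ?aP m) \<Longrightarrow>
     (\<Sum>k=0..n. of_nat (n choose k) * Apoly k x y a b * c ^ (n - k)) = Ppoly n u1 u2 u3 u4 \<alpha> \<beta>"
  proof -
    fix a b c assume h: "\<forall>m. ?aA a b m + (if m = 0 then c else 0) = ?aP m"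
    have "(\<Sum>k=0..n. of_nat (n choose k) * Apoly k x y a b * c ^ (n - k))
        = conv (E (?aA a b)) (E (\<lambda>m. if m = 0 then c else 0)) n"
      unfolding conv_def Apoly_E E_const by simp
    also have "\<dots> = E (\<lambda>m. ?aA a b m + (if m = 0 then c else 0)) n" by (rule conv_E)
    also have "(\<lambda>m. ?aA a b m + (if m = 0 then c else 0)) = ?aP" using h by (intro ext) blast
    finally show "(\<Sum>k=0..n. of_nat (n choose k) * Apoly k x y a b * c ^ (n - k)) = Ppoly n u1 u2 u3 u4 \<alpha> \<beta>"
      by (simp add: Ppoly_E)
  qed
  have h1: "\<forall>m. ?aA 0 (\<alpha> + \<beta>) m + (if m = 0 then \<alpha> * x - \<beta> * y + (\<beta> - \<alpha>) * u3 else 0) = ?aP m"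
  proof
    fix m :: nat
    show "?aA 0 (\<alpha> + \<beta>) m + (if m = 0 then \<alpha> * x - \<beta> * y + (\<beta> - \<alpha>) * u3 else 0) = ?aP m"
    proof (cases "m = 0")
      case True then show ?thesis by (simp add: u4 algebra_simps)
    next
      case False
      then have "u2 * hh ?tp m = y * hh ?ta m" using K by simp
      then show ?thesis using False
        by (simp add: algebra_simps)
    qed
  qed
  have h2: "\<forall>m. ?aA (\<alpha> + \<beta>) 0 m + (if m = 0 then \<alpha> * y - \<beta> * x + (\<beta> - \<alpha>) * u3 else 0) = ?aP m"
  proof
    fix m :: nat
    show "?aA (\<alpha> + \<beta>) 0 m + (if m = 0 then \<alpha> * y - \<beta> * x + (\<beta> - \<alpha>) * u3 else 0) = ?aP m"
    proof (cases "m = 0")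
      case True then show ?thesis by (simp add: u4 algebra_simps)
    next
      case False
      then have "u2 * hh ?tp m = y * hh ?ta m" using K by simp
      then show ?thesis using False
        by (simp add: algebra_simps)
    qed
  qed
  show ?thesis using gen[OF h1] gen[OF h2] by simp
qed

end
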